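(* Let $\varphi$ be a primitive morphism on a finite alphabet $A$, let $\mathcal{L}_\varphi$ be the language generated by $\varphi$, and let ${\rm S}:\mathcal{L}_\varphi\to\mathbb{Z}\times\mathbb{Z}$ be a homomorphism. If the drift $\Delta_\varphi({\rm S})=\sum_{a\in A}\mu_\varphi(a){\rm S}(a)$ is not $(0,0)$, then $(\mathbb{Z}\times\mathbb{Z})\setminus{\rm S}(\mathcal{L}_\varphi)$ is infinite.
   Context: A morphism $\varphi:A^*\to A^*$ is primitive if there is $k\ge1$ such that for all letters $a,b\in A$ the letter $b$ occurs in $\varphi^k(a)$. The language $\mathcal{L}_\varphi$ generated by $\varphi$ is the set of all nonempty finite words occurring as factors of $\varphi^n(a)$ for some $n\ge0$ and some $a\in A$. For a primitive morphism, $\mu_\varphi(a)$ denotes the frequency of the letter $a$ (under the unique invariant probability measure of the associated substitution subshift); equivalently, $(\mu_\varphi(a))_{a\in A}$ is the positive Perron–Frobenius eigenvector, normalized to have sum $1$, of the incidence matrix $M$ with $M_{a,b}$ = number of occurrences of $a$ in $\varphi(b)$. A homomorphism ${\rm S}:\mathcal{L}_\varphi\to\mathbb{Z}\times\mathbb{Z}$ is a map with ${\rm S}(w_1\cdots w_n)={\rm S}(w_1)+\cdots+{\rm S}(w_n)$, determined by the vectors ${\rm S}(a)$, $a\in A$. *)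

theory Defs
  imports Complex_Main "HOL-Library.Sublist"
begin

definition morph_app :: "('a \<Rightarrow> 'a list) \<Rightarrow> 'a list \<Rightarrow> 'a list" where
  "morph_app \<phi> w = concat (map \<phi> w)"

definition morph_pow :: "('a \<Rightarrow> 'a list) \<Rightarrow> nat \<Rightarrow> 'a list \<Rightarrow> 'a list" where
  "morph_pow \<phi> n = (morph_app \<phi>) ^^ n"

definition primitive :: "('a \<Rightarrow> 'a list) \<Rightarrow> bool" where
  "primitive \<phi> \<longleftrightarrow> (\<exists>k\<ge>1. \<forall>a b. b \<in> set (morph_pow \<phi> k [a]))"

definition lang :: "('a \<Rightarrow> 'a list) \<Rightarrow> 'a list set" where
  "lang \<phi> = {w. w \<noteq> [] \<and> (\<exists>n a. sublist w (morph_pow \<phi> n [a]))}"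

definition incidence :: "('a \<Rightarrow> 'a list) \<Rightarrow> 'a \<Rightarrow> 'a \<Rightarrow> nat" where
  "incidence \<phi> a b = count_list (\<phi> b) a"

text \<open>Letter frequencies: the positive Perron-Frobenius eigenvector of the
  incidence matrix, normalised to sum 1.\<close>
definition is_PF_freq :: "('a::finite \<Rightarrow> 'a list) \<Rightarrow> ('a \<Rightarrow> real) \<Rightarrow> bool" where
  "is_PF_freq \<phi> \<mu> \<longleftrightarrow> (\<forall>a. \<mu> a > 0) \<and> (\<Sum>a\<in>UNIV. \<mu> a) = 1 \<and>
     (\<exists>r. \<forall>a. (\<Sum>b\<in>UNIV. real (incidence \<phi> a b) * \<mu> b) = r * \<mu> a)"

definition freq :: "('a::finite \<Rightarrow> 'a list) \<Rightarrow> 'a \<Rightarrow> real" where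
  "freq \<phi> = (THE \<mu>. is_PF_freq \<phi> \<mu>)"

definition hom_word :: "('a \<Rightarrow> int \<times> int) \<Rightarrow> 'a list \<Rightarrow> int \<times> int" where
  "hom_word S w = (sum_list (map (\<lambda>x. fst (S x)) w), sum_list (map (\<lambda>x. snd (S x)) w))"

definition drift :: "('a::finite \<Rightarrow> 'a list) \<Rightarrow> ('a \<Rightarrow> int \<times> int) \<Rightarrow> real \<times> real" where
  "drift \<phi> S = ((\<Sum>a\<in>UNIV. freq \<phi> a * real_of_int (fst (S a))),
                (\<Sum>a\<in>UNIV. freq \<phi> a * real_of_int (snd (S a))))"

end

theory Submission
  imports Defs "HOL-Analysis.Analysis"
begin

lemma ma_append[simp]: "morph_app \<phi> (u @ v) = morph_app \<phi> u @ morph_app \<phi> v"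
  by (simp add: morph_app_def)

lemma ma_Nil[simp]: "morph_app \<phi> [] = []"
  by (simp add: morph_app_def)

lemma ma_single[simp]: "morph_app \<phi> [x] = \<phi> x"
  by (simp add: morph_app_def)

lemma mp_Suc: "morph_pow \<phi> (Suc n) w = morph_app \<phi> (morph_pow \<phi> n w)"
  by (simp add: morph_pow_def)

lemma mp_Suc': "morph_pow \<phi> (Suc n) w = morph_pow \<phi> n (morph_app \<phi> w)"
  by (simp add: morph_pow_def funpow_swap1)

lemma mp_0[simp]: "morph_pow \<phi> 0 w = w"
  by (simp add: morph_pow_def)

lemma mp_add: "morph_pow \<phi> (m + n) w = morph_pow \<phi> m (morph_pow \<phi> n w)"
  by (simp add: morph_pow_def funpow_add)

lemma mp_append: "morph_pow \<phi> n (u @ v) = morph_pow \<phi> n u @ morph_pow \<phi> n v"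
  by (induction n arbitrary: u v) (auto simp: mp_Suc)

lemma mp_Nil[simp]: "morph_pow \<phi> n [] = []"
  by (induction n) (auto simp: mp_Suc)

lemma mp_Cons: "morph_pow \<phi> n (x # u) = morph_pow \<phi> n [x] @ morph_pow \<phi> n u"
  using mp_append[of \<phi> n "[x]" u] by simp

lemma mp_concat: "morph_pow \<phi> n w = concat (map (\<lambda>c. morph_pow \<phi> n [c]) w)"
proof (induction w)
  case (Cons x w)
  then show ?case using mp_Cons[of \<phi> n x w] by simp
qed simp

definition Lmax :: "('a::finite \<Rightarrow> 'a list) \<Rightarrow> nat" where
  "Lmax \<phi> = (\<Sum>a\<in>UNIV. length (\<phi> a))"

lemma Lmax_ge: "length (\<phi> a) \<le> Lmax \<phi>"
  unfolding Lmax_def by (rule member_le_sum) auto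

lemma prefix_decomp:
  assumes "prefix r (morph_app \<phi> v)"
  shows "\<exists>u p. r = morph_app \<phi> u @ p \<and> prefix u v \<and> length p \<le> Lmax \<phi>"
  using assms
proof (induction v arbitrary: r)
  case Nil
  then show ?case by auto
next
  case (Cons x v)
  have "morph_app \<phi> (x # v) = \<phi> x @ morph_app \<phi> v"
    using ma_append[of \<phi> "[x]" v] by simp
  with Cons.prems have "prefix r (\<phi> x) \<or> (\<exists>us. r = \<phi> x @ us \<and> prefix us (morph_app \<phi> v))"
    by (simp add: prefix_append)
  then show ?case
  proof
    assume "prefix r (\<phi> x)"
    then have "length r \<le> Lmax \<phi>" using Lmax_ge[of \<phi> x] prefix_length_le order_trans by blast
    then show ?thesis by (intro exI[of _ "[]"] exI[of _ r]) auto
  next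
    assume "\<exists>us. r = \<phi> x @ us \<and> prefix us (morph_app \<phi> v)"
    then obtain us where us: "r = \<phi> x @ us" "prefix us (morph_app \<phi> v)" by blast
    from Cons.IH[OF us(2)] obtain u p where "us = morph_app \<phi> u @ p" "prefix u v" "length p \<le> Lmax \<phi>"
      by blast
    then show ?thesis using us
      by (intro exI[of _ "x # u"] exI[of _ p]) (auto simp: morph_app_def)
  qed
qed

lemma sublist_decomp:
  assumes "sublist w (morph_app \<phi> v)"
  shows "\<exists>s u p. w = s @ morph_app \<phi> u @ p \<and> sublist u v \<and> length s \<le> Lmax \<phi> \<and> length p \<le> Lmax \<phi>"
  using assms
proof (induction v arbitrary: w)
  case Nil
  then show ?case by (intro exI[of _ "[]"] exI[of _ "[]"] exI[of _ "[]"]) auto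
next
  case (Cons x v)
  have "morph_app \<phi> (x # v) = \<phi> x @ morph_app \<phi> v"
    using ma_append[of \<phi> "[x]" v] by simp
  with Cons.prems have "sublist w (\<phi> x) \<or> sublist w (morph_app \<phi> v) \<or>
     (\<exists>xs1 xs2. w = xs1 @ xs2 \<and> suffix xs1 (\<phi> x) \<and> prefix xs2 (morph_app \<phi> v))"
    by (simp add: sublist_append)
  moreover {
    assume "sublist w (\<phi> x)"
    then have "length w \<le> Lmax \<phi>" using Lmax_ge[of \<phi> x] sublist_length_le order_trans by blast
    then have ?case by (intro exI[of _ w] exI[of _ "[]"] exI[of _ "[]"]) auto
  } moreover {
    assume "sublist w (morph_app \<phi> v)"
    from Cons.IH[OF this] obtain s u p where "w = s @ morph_app \<phi> u @ p" "sublist u v"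
       "length s \<le> Lmax \<phi>" "length p \<le> Lmax \<phi>" by blast
    moreover have "sublist u (x # v)" using \<open>sublist u v\<close> by (simp add: sublist_Cons_right)
    ultimately have ?case by blast
  } moreover {
    assume "\<exists>xs1 xs2. w = xs1 @ xs2 \<and> suffix xs1 (\<phi> x) \<and> prefix xs2 (morph_app \<phi> v)"
    then obtain xs1 xs2 where h: "w = xs1 @ xs2" "suffix xs1 (\<phi> x)" "prefix xs2 (morph_app \<phi> v)"
      by blast
    from prefix_decomp[OF h(3)] obtain u p where up: "xs2 = morph_app \<phi> u @ p" "prefix u v" "length p \<le> Lmax \<phi>"
      by blast
    have "length xs1 \<le> Lmax \<phi>" using h(2) Lmax_ge[of \<phi> x] suffix_length_le order_trans by blast
    moreover have "sublist u (x # v)" using up(2)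
      by (meson prefix_imp_sublist sublist_Cons_right)
    ultimately have ?case using h up by blast
  }
  ultimately show ?case by blast
qed

definition Bw :: "('a \<Rightarrow> real) \<Rightarrow> 'a list \<Rightarrow> real" where
  "Bw \<beta> w = sum_list (map \<beta> w)"

lemma Bw_append[simp]: "Bw \<beta> (u @ v) = Bw \<beta> u + Bw \<beta> v"
  by (simp add: Bw_def)

lemma Bw_mp: "Bw \<beta> (morph_pow \<phi> j t) = sum_list (map (\<lambda>x. Bw \<beta> (morph_pow \<phi> j [x])) t)"
proof (induction t)
  case (Cons x t)
  then show ?case using mp_Cons[of \<phi> j x t] by simp
qed (simp add: Bw_def)

lemma Bw_lower:
  assumes "\<forall>x. Bw \<beta> (morph_pow \<phi> j [x]) \<ge> - K" "K \<ge> 0"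
  shows "Bw \<beta> (morph_pow \<phi> j t) \<ge> - (real (length t) * K)"
proof (induction t)
  case Nil
  then show ?case by (simp add: Bw_def)
next
  case (Cons x t)
  have "Bw \<beta> (morph_pow \<phi> j (x # t)) = Bw \<beta> (morph_pow \<phi> j [x]) + Bw \<beta> (morph_pow \<phi> j t)"
    using mp_Cons[of \<phi> j x t] by simp
  moreover have "Bw \<beta> (morph_pow \<phi> j [x]) \<ge> - K" using assms(1) by auto
  ultimately show ?case using Cons.IH by (simp add: algebra_simps)
qed

lemma Z_rec:
  fixes K :: "nat \<Rightarrow> real"
  assumes "\<forall>i\<ge>J. K i = 0"
  shows "(\<Sum>i\<in>{j..<J}. K i) = K j + (\<Sum>i\<in>{Suc j..<J}. K i)"
proof (cases "j < J")
  case True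
  then have "{j..<J} = insert j {Suc j..<J}" by auto
  then show ?thesis by simp
next
  case False
  then show ?thesis using assms by simp
qed

lemma main_bound:
  fixes K :: "nat \<Rightarrow> real"
  assumes K0: "\<forall>i. K i \<ge> 0" and KJ: "\<forall>i\<ge>J. K i = 0"
    and Kb: "\<forall>i x. Bw \<beta> (morph_pow \<phi> i [x]) \<ge> - K i"
  shows "sublist u (morph_pow \<phi> n [a]) \<Longrightarrow>
     Bw \<beta> (morph_pow \<phi> j u) \<ge> - ((2 * real (Lmax \<phi>) + 1) * (\<Sum>i\<in>{j..<J}. K i))"
proof (induction n arbitrary: u j)
  case 0
  then have "length u \<le> 1" using sublist_length_le by fastforce
  have Zn: "(\<Sum>i\<in>{Suc j..<J}. K i) \<ge> 0" using K0 by (simp add: sum_nonneg)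
  have "Bw \<beta> (morph_pow \<phi> j u) \<ge> - (real (length u) * K j)"
    using Bw_lower[where \<beta>=\<beta> and \<phi>=\<phi> and j=j and K="K j" and t=u] Kb K0 by auto
  moreover have "real (length u) * K j \<le> K j" using \<open>length u \<le> 1\<close> K0
    by (simp add: mult_left_le_one_le)
  moreover have "K j \<le> (2 * real (Lmax \<phi>) + 1) * (\<Sum>i\<in>{j..<J}. K i)"
    using Z_rec[OF KJ, of j] Zn K0
    by (smt (verit, ccfv_SIG) mult_le_cancel_right1 of_nat_0_le_iff)
  ultimately show ?case by linarith
next
  case (Suc n)
  then have "sublist u (morph_app \<phi> (morph_pow \<phi> n [a]))" by (simp add: mp_Suc)
  from sublist_decomp[OF this] obtain s v p where d: "u = s @ morph_app \<phi> v @ p"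
     "sublist v (morph_pow \<phi> n [a])" "length s \<le> Lmax \<phi>" "length p \<le> Lmax \<phi>" by blast
  have eq: "Bw \<beta> (morph_pow \<phi> j u) = Bw \<beta> (morph_pow \<phi> j s) + Bw \<beta> (morph_pow \<phi> (Suc j) v)
      + Bw \<beta> (morph_pow \<phi> j p)"
    by (simp add: d(1) mp_append mp_Suc')
  have IH: "Bw \<beta> (morph_pow \<phi> (Suc j) v) \<ge> - ((2 * real (Lmax \<phi>) + 1) * (\<Sum>i\<in>{Suc j..<J}. K i))"
    using Suc.IH[OF d(2)] .
  have s: "Bw \<beta> (morph_pow \<phi> j s) \<ge> - (real (Lmax \<phi>) * K j)"
  proof -
    have "Bw \<beta> (morph_pow \<phi> j s) \<ge> - (real (length s) * K j)"
      using Bw_lower[where \<beta>=\<beta> and \<phi>=\<phi> and j=j and K="K j" and t=s] Kb K0 by auto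
    moreover have "real (length s) * K j \<le> real (Lmax \<phi>) * K j"
      using d(3) K0 by (simp add: mult_right_mono)
    ultimately show ?thesis by linarith
  qed
  have p: "Bw \<beta> (morph_pow \<phi> j p) \<ge> - (real (Lmax \<phi>) * K j)"
  proof -
    have "Bw \<beta> (morph_pow \<phi> j p) \<ge> - (real (length p) * K j)"
      using Bw_lower[where \<beta>=\<beta> and \<phi>=\<phi> and j=j and K="K j" and t=p] Kb K0 by auto
    moreover have "real (length p) * K j \<le> real (Lmax \<phi>) * K j"
      using d(4) K0 by (simp add: mult_right_mono)
    ultimately show ?thesis by linarith
  qed
  have "K j \<ge> 0" using K0 by auto
  then show ?case using eq IH s p Z_rec[OF KJ, of j]
    by (simp add: algebra_simps)
qed


lemma sum_list_count:
  fixes g :: "'a::finite \<Rightarrow> real"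
  shows "sum_list (map g w) = (\<Sum>c\<in>UNIV. real (count_list w c) * g c)"
proof (induction w)
  case Nil
  then show ?case by simp
next
  case (Cons x w)
  have "(\<Sum>c\<in>UNIV. real (count_list (x # w) c) * g c) =
        (\<Sum>c\<in>UNIV. real (count_list w c) * g c + (if c = x then g c else 0))"
    by (rule sum.cong) (auto simp: algebra_simps)
  also have "\<dots> = (\<Sum>c\<in>UNIV. real (count_list w c) * g c) + g x"
    by (simp add: sum.distrib)
  finally show ?case using Cons by simp
qed

lemma count_mp:
  fixes \<phi> :: "'a::finite \<Rightarrow> 'a list"
  shows "real (count_list (morph_pow \<phi> k w) a) =
    (\<Sum>c\<in>UNIV. real (count_list w c) * real (count_list (morph_pow \<phi> k [c]) a))"
proof -
  have "real (count_list (morph_pow \<phi> k w) a) = sum_list (map (\<lambda>c. real (count_list (morph_pow \<phi> k [c]) a)) w)"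
  proof (induction w)
    case (Cons x w)
    then show ?case using mp_Cons[of \<phi> k x w] by simp
  qed simp
  then show ?thesis by (simp add: sum_list_count)
qed

lemma Bw_count:
  fixes \<beta> :: "'a::finite \<Rightarrow> real"
  shows "Bw \<beta> w = (\<Sum>c\<in>UNIV. real (count_list w c) * \<beta> c)"
  by (simp add: Bw_def sum_list_count)

lemma mu_le1:
  fixes \<mu> :: "'a::finite \<Rightarrow> real"
  assumes "\<forall>a. \<mu> a > 0" "sum \<mu> UNIV = 1"
  shows "\<mu> a \<le> 1"
proof -
  have "\<mu> a \<le> sum \<mu> UNIV" by (rule member_le_sum) (use assms in \<open>auto simp: less_imp_le\<close>)
  then show ?thesis using assms by simp
qed

lemma rho_ge1:
  fixes P :: "'a::finite \<Rightarrow> 'a \<Rightarrow> real" and \<mu> :: "'a \<Rightarrow> real"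
  assumes P1: "\<forall>a b. P a b \<ge> 1" and mu: "\<forall>a. \<mu> a > 0" and sum1: "sum \<mu> UNIV = 1"
   and eig: "\<forall>a. (\<Sum>b\<in>UNIV. P a b * \<mu> b) = \<rho> * \<mu> a"
  shows "\<rho> \<ge> 1"
proof -
  fix a :: 'a
  have "(\<Sum>b\<in>UNIV. P a b * \<mu> b) \<ge> (\<Sum>b\<in>UNIV. \<mu> b)"
    by (rule sum_mono) (use P1 mu in \<open>auto intro: mult_right_mono[where b=1, simplified] less_imp_le\<close>)
  then have A: "\<rho> * \<mu> a \<ge> 1" using eig sum1 by simp
  have B: "\<mu> a \<le> 1" "\<mu> a > 0" using mu_le1[OF mu sum1] mu by auto
  show ?thesis
  proof (rule ccontr)
    assume "\<not> 1 \<le> \<rho>"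
    then have "\<rho> < 1" by simp
    then have "\<rho> * \<mu> a < 1"
      using B by (smt (verit, best) mult_le_cancel_right1 mult_less_cancel_right1)
    then show False using A by simp
  qed
qed

lemma step_bound:
  fixes P :: "'a::finite \<Rightarrow> 'a \<Rightarrow> real" and \<mu> x :: "'a \<Rightarrow> real"
  assumes P1: "\<forall>a b. P a b \<ge> 1" and mu: "\<forall>a. \<mu> a > 0" and sum1: "sum \<mu> UNIV = 1"
   and eig: "\<forall>a. (\<Sum>b\<in>UNIV. P a b * \<mu> b) = \<rho> * \<mu> a"
   and bnd: "\<forall>a. l * \<mu> a \<le> x a \<and> x a \<le> h * \<mu> a"
  shows "(l + (sum x UNIV - l) / \<rho>) * \<mu> a \<le> (\<Sum>b\<in>UNIV. P a b * x b) / \<rho> \<and>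
         (\<Sum>b\<in>UNIV. P a b * x b) / \<rho> \<le> (h - (h - sum x UNIV) / \<rho>) * \<mu> a"
proof -
  have rho: "\<rho> \<ge> 1" by (rule rho_ge1[OF P1 mu sum1 eig])
  have mua: "\<mu> a \<le> 1" "\<mu> a > 0" using mu_le1[OF mu sum1] mu by auto
  define y where "y b = x b - l * \<mu> b" for b
  define z where "z b = h * \<mu> b - x b" for b
  have y0: "y b \<ge> 0" for b using bnd by (simp add: y_def)
  have z0: "z b \<ge> 0" for b using bnd by (simp add: z_def)
  have sy: "sum y UNIV = sum x UNIV - l"
    by (simp add: y_def sum_subtractf sum_distrib_left[symmetric] sum1)
  have sz: "sum z UNIV = h - sum x UNIV"
    by (simp add: z_def sum_subtractf sum_distrib_left[symmetric] sum1)
  have Py: "(\<Sum>b\<in>UNIV. P a b * y b) \<ge> sum y UNIV"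
    by (rule sum_mono) (use mult_right_mono[of 1 "P a _" "y _"] P1 y0 in auto)
  have Pz: "(\<Sum>b\<in>UNIV. P a b * z b) \<ge> sum z UNIV"
    by (rule sum_mono) (use mult_right_mono[of 1 "P a _" "z _"] P1 z0 in auto)
  have ex1: "(\<Sum>b\<in>UNIV. P a b * x b) = l * (\<rho> * \<mu> a) + (\<Sum>b\<in>UNIV. P a b * y b)"
  proof -
    have "(\<Sum>b\<in>UNIV. P a b * x b) = (\<Sum>b\<in>UNIV. l * (P a b * \<mu> b) + P a b * y b)"
      by (rule sum.cong) (auto simp: y_def algebra_simps)
    also have "\<dots> = l * (\<Sum>b\<in>UNIV. P a b * \<mu> b) + (\<Sum>b\<in>UNIV. P a b * y b)"
      by (simp add: sum.distrib sum_distrib_left)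
    finally show ?thesis using eig by simp
  qed
  have ex2: "(\<Sum>b\<in>UNIV. P a b * x b) = h * (\<rho> * \<mu> a) - (\<Sum>b\<in>UNIV. P a b * z b)"
  proof -
    have "(\<Sum>b\<in>UNIV. P a b * x b) = (\<Sum>b\<in>UNIV. h * (P a b * \<mu> b) - P a b * z b)"
      by (rule sum.cong) (auto simp: z_def algebra_simps)
    also have "\<dots> = h * (\<Sum>b\<in>UNIV. P a b * \<mu> b) - (\<Sum>b\<in>UNIV. P a b * z b)"
      by (simp add: sum_subtractf sum_distrib_left)
    finally show ?thesis using eig by simp
  qed
  have syp: "sum y UNIV * \<mu> a \<le> sum y UNIV"
    using mua sum_nonneg[of UNIV y] y0 by (simp add: mult_left_le)
  have szp: "sum z UNIV * \<mu> a \<le> sum z UNIV"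
    using mua sum_nonneg[of UNIV z] z0 by (simp add: mult_left_le)
  have L: "(l + (sum x UNIV - l) / \<rho>) * \<mu> a = (l * (\<rho> * \<mu> a) + sum y UNIV * \<mu> a) / \<rho>"
    unfolding sy[symmetric] using rho by (simp add: field_simps)
  have U: "(h - (h - sum x UNIV) / \<rho>) * \<mu> a = (h * (\<rho> * \<mu> a) - sum z UNIV * \<mu> a) / \<rho>"
    unfolding sz[symmetric] using rho by (simp add: field_simps)
  show ?thesis
    unfolding L U using rho ex1 ex2 Py Pz syp szp
    by (auto intro!: divide_right_mono)
qed


lemma sign_lemma:
  fixes P :: "'a::finite \<Rightarrow> 'a \<Rightarrow> real" and \<mu> \<beta> :: "'a \<Rightarrow> real" and u :: "nat \<Rightarrow> 'a \<Rightarrow> real"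
  assumes P1: "\<forall>a b. P a b \<ge> 1" and mu: "\<forall>a. \<mu> a > 0" and sum1: "sum \<mu> UNIV = 1"
   and eig: "\<forall>a. (\<Sum>b\<in>UNIV. P a b * \<mu> b) = \<rho> * \<mu> a"
   and rec: "\<forall>n a. u (Suc n) a = (\<Sum>b\<in>UNIV. P a b * u n b) / \<rho>"
   and u0: "\<forall>a. u 0 a \<ge> 0" and s0: "sum (u 0) UNIV > 0"
   and bm: "(\<Sum>a\<in>UNIV. \<beta> a * \<mu> a) > 0"
  shows "\<exists>N. \<forall>n\<ge>N. (\<Sum>a\<in>UNIV. \<beta> a * u n a) \<ge> 0"
proof -
  have rho: "\<rho> \<ge> 1" by (rule rho_ge1[OF P1 mu sum1 eig])
  define lam where "lam = 1 - 1 / \<rho>"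
  have lam: "0 \<le> lam" "lam < 1" using rho by (auto simp: lam_def)
  define S0 where "S0 = sum (u 0) UNIV"
  define h0 where "h0 = (\<Sum>a\<in>UNIV. u 0 a / \<mu> a)"
  have h0: "u 0 a \<le> h0 * \<mu> a" for a
  proof -
    have "u 0 a / \<mu> a \<le> h0" unfolding h0_def
      by (rule member_le_sum) (use u0 mu in \<open>auto intro: divide_nonneg_pos\<close>)
    then show ?thesis using mu by (simp add: pos_divide_le_eq)
  qed
  have h0nn: "h0 \<ge> 0" unfolding h0_def using u0 mu by (auto intro!: sum_nonneg divide_nonneg_pos)
  have it: "\<exists>l h. (\<forall>a. l * \<mu> a \<le> u n a \<and> u n a \<le> h * \<mu> a) \<and> 0 \<le> l \<and>
       (n \<ge> 1 \<longrightarrow> S0 / \<rho> \<le> l) \<and> h - l \<le> lam ^ n * h0" for n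
  proof (induction n)
    case 0
    show ?case by (rule exI[of _ 0], rule exI[of _ h0]) (use u0 h0 in auto)
  next
    case (Suc n)
    then obtain l h where lh: "\<forall>a. l * \<mu> a \<le> u n a \<and> u n a \<le> h * \<mu> a" "0 \<le> l"
       "n \<ge> 1 \<longrightarrow> S0 / \<rho> \<le> l" "h - l \<le> lam ^ n * h0" by blast
    define sn where "sn = sum (u n) UNIV"
    have snl: "sn \<ge> l"
    proof -
      have "(\<Sum>a\<in>UNIV. l * \<mu> a) \<le> sn" unfolding sn_def by (rule sum_mono) (use lh in auto)
      then show ?thesis by (simp add: sum_distrib_left[symmetric] sum1)
    qed
    define l' where "l' = l + (sn - l) / \<rho>"
    define h' where "h' = h - (h - sn) / \<rho>"
    have b: "\<forall>a. l' * \<mu> a \<le> u (Suc n) a \<and> u (Suc n) a \<le> h' * \<mu> a"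
      using step_bound[OF P1 mu sum1 eig lh(1)] rec unfolding l'_def h'_def sn_def by auto
    have "l' \<ge> l" unfolding l'_def using snl rho by simp
    moreover have "h' - l' = lam * (h - l)" unfolding h'_def l'_def lam_def
      using rho by (simp add: field_simps)
    moreover have "S0 / \<rho> \<le> l'"
    proof (cases "n = 0")
      case True
      then have "l' = l * lam + S0 / \<rho>" unfolding l'_def lam_def sn_def S0_def
        using rho by (simp add: field_simps)
      then show ?thesis using lam lh(2) by simp
    next
      case False
      then show ?thesis using lh(3) \<open>l' \<ge> l\<close> by simp
    qed
    moreover have "lam * (h - l) \<le> lam ^ Suc n * h0" using lh(4) lam(1)
      by (simp add: mult_left_mono mult.assoc)
    ultimately show ?case using b lh(2) by (intro exI[of _ l'] exI[of _ h']) auto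
  qed
  define B where "B = (\<Sum>a\<in>UNIV. \<bar>\<beta> a\<bar> * \<mu> a)"
  have B0: "B \<ge> 0" unfolding B_def using mu by (intro sum_nonneg mult_nonneg_nonneg) (auto simp: less_imp_le)
  define bmu where "bmu = (\<Sum>a\<in>UNIV. \<beta> a * \<mu> a)"
  have S0p: "S0 > 0" using s0 by (simp add: S0_def)
  define eps where "eps = (S0 / \<rho> * bmu) / (h0 * B + 1)"
  have bmp: "bmu > 0" using bm by (simp add: bmu_def)
  have epsp: "eps > 0" unfolding eps_def using S0p rho bmp h0nn B0
    by (intro divide_pos_pos mult_pos_pos) (auto simp: add_nonneg_pos)
  obtain n0 where n0: "lam ^ n0 < eps" using real_arch_pow_inv[OF epsp lam(2)] by blast
  show ?thesis
  proof (rule exI[of _ "Suc n0"], intro allI impI)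
    fix n assume nn: "Suc n0 \<le> n"
    obtain l h where lh: "\<forall>a. l * \<mu> a \<le> u n a \<and> u n a \<le> h * \<mu> a" "0 \<le> l"
       "n \<ge> 1 \<longrightarrow> S0 / \<rho> \<le> l" "h - l \<le> lam ^ n * h0" using it[of n] by blast
    have ln: "S0 / \<rho> \<le> l" using lh(3) nn by simp
    have pw: "lam ^ n \<le> lam ^ n0" using power_decreasing[of n0 n lam] nn lam by simp
    have each: "\<beta> a * u n a \<ge> l * (\<beta> a * \<mu> a) - (h - l) * (\<bar>\<beta> a\<bar> * \<mu> a)" for a
    proof -
      have w: "0 \<le> u n a - l * \<mu> a" "u n a - l * \<mu> a \<le> (h - l) * \<mu> a"
        using lh(1) by (auto simp: algebra_simps)
      have "\<bar>\<beta> a * (u n a - l * \<mu> a)\<bar> = \<bar>\<beta> a\<bar> * (u n a - l * \<mu> a)"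
        using w(1) by (simp add: abs_mult)
      also have "\<dots> \<le> \<bar>\<beta> a\<bar> * ((h - l) * \<mu> a)" using w(2) by (simp add: mult_left_mono)
      finally have "\<beta> a * (u n a - l * \<mu> a) \<ge> - (\<bar>\<beta> a\<bar> * ((h - l) * \<mu> a))" by linarith
      then show ?thesis by (simp add: algebra_simps)
    qed
    have "(\<Sum>a\<in>UNIV. \<beta> a * u n a) \<ge> (\<Sum>a\<in>UNIV. l * (\<beta> a * \<mu> a) - (h - l) * (\<bar>\<beta> a\<bar> * \<mu> a))"
      by (rule sum_mono) (use each in auto)
    also have "(\<Sum>a\<in>UNIV. l * (\<beta> a * \<mu> a) - (h - l) * (\<bar>\<beta> a\<bar> * \<mu> a)) = l * bmu - (h - l) * B"
      unfolding bmu_def B_def by (simp add: sum_subtractf sum_distrib_left)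
    finally have main: "(\<Sum>a\<in>UNIV. \<beta> a * u n a) \<ge> l * bmu - (h - l) * B" .
    have "(h - l) * B \<le> lam ^ n * h0 * B" using lh(4) B0 by (simp add: mult_right_mono)
    also have "\<dots> \<le> lam ^ n0 * (h0 * B)" using pw h0nn B0 by (simp add: mult_right_mono mult.assoc)
    also have "\<dots> \<le> eps * (h0 * B)" using n0 h0nn B0 by (simp add: mult_right_mono less_imp_le)
    also have "\<dots> \<le> eps * (h0 * B + 1)" using epsp by simp
    also have "\<dots> = S0 / \<rho> * bmu" unfolding eps_def using h0nn B0
      by (simp add: add_nonneg_pos[of "h0 * B" 1] less_imp_neq[symmetric])
    also have "\<dots> \<le> l * bmu" using mult_right_mono[OF ln, of bmu] bmp by linarith
    finally show "(\<Sum>a\<in>UNIV. \<beta> a * u n a) \<ge> 0" using main by linarith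
  qed
qed


lemma PF_exists:
  fixes M :: "'a::finite \<Rightarrow> 'a \<Rightarrow> real"
  assumes M0: "\<forall>a b. M a b \<ge> 0" and col: "\<forall>b. (\<Sum>a\<in>UNIV. M a b) \<ge> 1"
  shows "\<exists>\<mu>. (\<forall>a. \<mu> a \<ge> 0) \<and> sum \<mu> UNIV = 1 \<and> (\<exists>r. \<forall>a. (\<Sum>b\<in>UNIV. M a b * \<mu> b) = r * \<mu> a)"
proof -
  define S where "S = {x :: real ^ 'a. (\<forall>a. 0 \<le> x $ a) \<and> (\<Sum>a\<in>UNIV. x $ a) = 1}"
  define D where "D x = (\<Sum>a\<in>UNIV. \<Sum>b\<in>UNIV. M a b * x $ b)" for x :: "real ^ 'a"
  define f where "f x = (\<chi> a. (\<Sum>b\<in>UNIV. M a b * x $ b) / D x)" for x :: "real ^ 'a"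
  have D1: "D x \<ge> 1" if "x \<in> S" for x
  proof -
    have "D x = (\<Sum>b\<in>UNIV. (\<Sum>a\<in>UNIV. M a b) * x $ b)"
      unfolding D_def by (subst sum.swap) (simp add: sum_distrib_right)
    also have "\<dots> \<ge> (\<Sum>b\<in>UNIV. x $ b)"
    proof (rule sum_mono)
      fix b
      show "x $ b \<le> (\<Sum>a\<in>UNIV. M a b) * x $ b"
        using mult_right_mono[of 1 "(\<Sum>a\<in>UNIV. M a b)" "x $ b"] col that by (auto simp: S_def)
    qed
    finally show ?thesis using that by (simp add: S_def)
  qed
  have cS: "compact S"
  proof -
    have "closed S"
    proof -
      have "S = {x. \<forall>a. 0 \<le> x $ a} \<inter> {x. (\<Sum>a\<in>UNIV. x $ a) = 1}" by (auto simp: S_def)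
      moreover have "closed {x :: real ^ 'a. \<forall>a. 0 \<le> x $ a}" by (rule closed_positive_orthant)
      moreover have "closed {x :: real ^ 'a. (\<Sum>a\<in>UNIV. x $ a) = 1}"
        by (intro closed_Collect_eq continuous_intros continuous_on_component)
      ultimately show ?thesis by auto
    qed
    moreover have "bounded S"
    proof -
      have "S \<subseteq> cball 0 1"
      proof
        fix x assume "x \<in> S"
        then have "norm x \<le> 1" using norm_le_l1_cart[of x] by (simp add: S_def)
        then show "x \<in> cball 0 1" by simp
      qed
      then show ?thesis using bounded_cball bounded_subset by blast
    qed
    ultimately show ?thesis by (simp add: compact_eq_bounded_closed)
  qed
  have cvS: "convex S"
    unfolding convex_def S_def
    by (auto simp: sum.distrib sum_distrib_left[symmetric])
  have neS: "S \<noteq> {}"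
  proof -
    have "(\<chi> a. 1 / real CARD('a)) \<in> S" by (simp add: S_def)
    then show ?thesis by blast
  qed
  have cont: "continuous_on S f"
    unfolding f_def D_def
    by (intro continuous_intros continuous_on_component)
       (use D1 in \<open>fastforce simp: D_def\<close>)
  have fS: "f \<in> S \<rightarrow> S"
  proof
    fix x assume x: "x \<in> S"
    have Dp: "D x > 0" using D1[OF x] by simp
    have "(\<Sum>a\<in>UNIV. f x $ a) = D x / D x"
      unfolding f_def by (simp add: sum_divide_distrib[symmetric] D_def)
    moreover have "0 \<le> f x $ a" for a
      unfolding f_def using x M0 Dp
      by (auto simp: S_def intro!: divide_nonneg_pos sum_nonneg)
    ultimately show "f x \<in> S" using Dp by (simp add: S_def)
  qed
  obtain x where x: "x \<in> S" "f x = x" using brouwer[OF cS cvS neS cont fS] by blast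
  have Dp: "D x > 0" using D1[OF x(1)] by simp
  have "(\<Sum>b\<in>UNIV. M a b * x $ b) = D x * x $ a" for a
  proof -
    have "x $ a = (\<Sum>b\<in>UNIV. M a b * x $ b) / D x" using x(2) unfolding f_def
      by (metis vec_lambda_beta)
    then show ?thesis using Dp by (simp add: field_simps)
  qed
  then show ?thesis using x(1) unfolding S_def
    by (intro exI[of _ "\<lambda>a. x $ a"]) auto
qed

lemma PF_unique:
  fixes P :: "'a::finite \<Rightarrow> 'a \<Rightarrow> real" and \<mu> \<mu>' :: "'a \<Rightarrow> real"
  assumes P1: "\<forall>a b. P a b \<ge> 1" and mu: "\<forall>a. \<mu> a > 0" and sum1: "sum \<mu> UNIV = 1"
   and eig: "\<forall>a. (\<Sum>b\<in>UNIV. P a b * \<mu> b) = \<rho> * \<mu> a"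
   and mu': "\<forall>a. \<mu>' a > 0" and sum1': "sum \<mu>' UNIV = 1"
   and eig': "\<forall>a. (\<Sum>b\<in>UNIV. P a b * \<mu>' b) = \<rho>' * \<mu>' a"
  shows "\<rho>' \<le> \<rho> \<and> (\<rho>' = \<rho> \<longrightarrow> \<mu>' = \<mu>)"
proof -
  define t where "t = Max (range (\<lambda>a. \<mu>' a / \<mu> a))"
  have "t \<in> range (\<lambda>a. \<mu>' a / \<mu> a)" unfolding t_def by (rule Max_in) auto
  then obtain a0 where a0: "t = \<mu>' a0 / \<mu> a0" by auto
  have tb: "\<mu>' b \<le> t * \<mu> b" for b
  proof -
    have "\<mu>' b / \<mu> b \<le> t" unfolding t_def by (rule Max_ge) auto
    then show ?thesis using mu by (simp add: pos_divide_le_eq)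
  qed
  have ta0: "\<mu>' a0 = t * \<mu> a0" using a0 mu[rule_format, of a0] by (simp add: field_simps)
  define z where "z b = t * \<mu> b - \<mu>' b" for b
  have z0: "z b \<ge> 0" for b using tb by (simp add: z_def)
  have Pz: "(\<Sum>b\<in>UNIV. P a0 b * z b) = t * (\<rho> * \<mu> a0) - \<rho>' * \<mu>' a0"
  proof -
    have "(\<Sum>b\<in>UNIV. P a0 b * z b) = (\<Sum>b\<in>UNIV. t * (P a0 b * \<mu> b) - P a0 b * \<mu>' b)"
      by (rule sum.cong) (auto simp: z_def algebra_simps)
    also have "\<dots> = t * (\<Sum>b\<in>UNIV. P a0 b * \<mu> b) - (\<Sum>b\<in>UNIV. P a0 b * \<mu>' b)"
      by (simp add: sum_subtractf sum_distrib_left)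
    finally show ?thesis using eig eig' by simp
  qed
  have Pz0: "(\<Sum>b\<in>UNIV. P a0 b * z b) \<ge> 0"
    using z0 P1 by (intro sum_nonneg) (meson dual_order.trans mult_nonneg_nonneg zero_le_one)
  then have "\<rho>' * \<mu>' a0 \<le> \<rho> * \<mu>' a0" using Pz ta0 by (simp add: algebra_simps)
  then have le: "\<rho>' \<le> \<rho>" using mu' by (simp add: mult_le_cancel_right)
  moreover have "\<mu>' = \<mu>" if eq: "\<rho>' = \<rho>"
  proof -
    have Pzz: "(\<Sum>b\<in>UNIV. P a0 b * z b) = 0" using Pz ta0 eq by (simp add: algebra_simps)
    have zb: "z b = 0" for b
    proof -
      have "P a0 b * z b \<le> (\<Sum>b\<in>UNIV. P a0 b * z b)"
      proof (rule member_le_sum)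
        fix x
        show "0 \<le> P a0 x * z x" using z0[of x] P1
          by (meson dual_order.trans mult_nonneg_nonneg zero_le_one)
      qed auto
      moreover have "z b \<le> P a0 b * z b" using mult_right_mono[of 1 "P a0 b" "z b"] P1 z0 by simp
      ultimately show ?thesis using Pzz z0[of b] by linarith
    qed
    then have e: "\<mu>' b = t * \<mu> b" for b unfolding z_def by (metis eq_iff_diff_eq_0)
    then have "sum \<mu>' UNIV = t * sum \<mu> UNIV" by (simp add: sum_distrib_left)
    then have "t = 1" using sum1 sum1' by simp
    then show ?thesis using e by auto
  qed
  ultimately show ?thesis by blast
qed


definition G :: "('a \<Rightarrow> 'a list) \<Rightarrow> nat \<Rightarrow> 'a \<Rightarrow> 'a \<Rightarrow> real" where
  "G \<phi> n a c = real (count_list (morph_pow \<phi> n [c]) a)"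

lemma sum_count_len:
  fixes w :: "'a::finite list"
  shows "(\<Sum>a\<in>UNIV. real (count_list w a)) = real (length w)"
proof -
  have "sum_list (map (\<lambda>_. 1::real) w) = real (length w)" by (induction w) auto
  then show ?thesis using sum_list_count[of "\<lambda>_. 1" w] by simp
qed

lemma prim_k:
  assumes "primitive \<phi>"
  obtains k where "k \<ge> 1" "\<forall>a b. b \<in> set (morph_pow \<phi> k [a])"
  using assms unfolding primitive_def by blast

lemma phi_nonempty:
  assumes "primitive \<phi>"
  shows "\<phi> c \<noteq> []"
proof
  assume e: "\<phi> c = []"
  obtain k where k: "k \<ge> 1" "\<forall>a b. b \<in> set (morph_pow \<phi> k [a])" using prim_k[OF assms] by blast
  then obtain k' where "k = Suc k'" by (cases k) auto
  then have "morph_pow \<phi> k [c] = []" using e by (simp add: mp_Suc')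
  then show False using k(2)[rule_format, of c c] by simp
qed

lemma mp_nonempty:
  assumes "\<forall>c. \<phi> c \<noteq> []" "w \<noteq> []"
  shows "morph_pow \<phi> n w \<noteq> []"
proof (induction n)
  case 0
  then show ?case using assms by simp
next
  case (Suc n)
  then obtain x v where "morph_pow \<phi> n w = x # v" by (cases "morph_pow \<phi> n w") auto
  then show ?case using assms(1) by (simp add: mp_Suc morph_app_def)
qed

lemma G_pos:
  assumes "\<forall>a b. b \<in> set (morph_pow \<phi> k [a])"
  shows "G \<phi> k a c \<ge> 1"
proof -
  have "count_list (morph_pow \<phi> k [c]) a \<noteq> 0" using assms by (simp add: count_list_0_iff)
  then show ?thesis by (simp add: G_def)
qed

lemma G_eig:
  fixes \<phi> :: "'a::finite \<Rightarrow> 'a list"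
  assumes eig: "\<forall>a. (\<Sum>b\<in>UNIV. real (incidence \<phi> a b) * \<mu> b) = r * \<mu> a"
  shows "(\<Sum>c\<in>UNIV. G \<phi> n a c * \<mu> c) = r ^ n * \<mu> a"
proof (induction n arbitrary: a)
  case 0
  have "(\<Sum>c\<in>UNIV. G \<phi> 0 a c * \<mu> c) = (\<Sum>c\<in>UNIV. if c = a then \<mu> c else 0)"
    by (rule sum.cong) (auto simp: G_def)
  then show ?case by simp
next
  case (Suc n)
  have Gs: "G \<phi> (Suc n) a c = (\<Sum>d\<in>UNIV. real (incidence \<phi> d c) * G \<phi> n a d)" for c
    unfolding G_def incidence_def using count_mp[of \<phi> n "\<phi> c" a] by (simp add: mp_Suc')
  have "(\<Sum>c\<in>UNIV. G \<phi> (Suc n) a c * \<mu> c) =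
        (\<Sum>c\<in>UNIV. \<Sum>d\<in>UNIV. G \<phi> n a d * (real (incidence \<phi> d c) * \<mu> c))"
    unfolding Gs by (auto simp: sum_distrib_left sum_distrib_right mult_ac intro!: sum.cong)
  also have "\<dots> = (\<Sum>d\<in>UNIV. G \<phi> n a d * (\<Sum>c\<in>UNIV. real (incidence \<phi> d c) * \<mu> c))"
    by (subst sum.swap) (simp add: sum_distrib_left)
  also have "\<dots> = (\<Sum>d\<in>UNIV. r * (G \<phi> n a d * \<mu> d))"
    using eig by (simp add: algebra_simps)
  also have "\<dots> = r * r ^ n * \<mu> a" using Suc by (simp add: sum_distrib_left[symmetric])
  finally show ?case by simp
qed

lemma PF_freq:
  fixes \<phi> :: "'a::finite \<Rightarrow> 'a list"
  assumes prim: "primitive \<phi>"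
  shows "is_PF_freq \<phi> (freq \<phi>)"
proof -
  obtain k where k: "k \<ge> 1" "\<forall>a b. b \<in> set (morph_pow \<phi> k [a])" using prim_k[OF prim] by blast
  have P1: "\<forall>a c. G \<phi> k a c \<ge> 1" using G_pos[OF k(2)] by blast
  have col: "\<forall>b. (\<Sum>a\<in>UNIV. real (incidence \<phi> a b)) \<ge> 1"
  proof
    fix b
    have "(\<Sum>a\<in>UNIV. real (incidence \<phi> a b)) = real (length (\<phi> b))"
      unfolding incidence_def by (rule sum_count_len)
    moreover have "length (\<phi> b) \<ge> 1" using phi_nonempty[OF prim, of b] by (cases "\<phi> b") auto
    ultimately show "(\<Sum>a\<in>UNIV. real (incidence \<phi> a b)) \<ge> 1" by simp
  qed
  obtain \<mu> r where mu: "\<forall>a. \<mu> a \<ge> 0" "sum \<mu> UNIV = 1"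
      "\<forall>a. (\<Sum>b\<in>UNIV. real (incidence \<phi> a b) * \<mu> b) = r * \<mu> a"
    using PF_exists[of "\<lambda>a b. real (incidence \<phi> a b)"] col by auto
  have mupos: "\<forall>a. \<mu> a > 0"
  proof
    fix a
    have "(\<Sum>c\<in>UNIV. G \<phi> k a c * \<mu> c) \<ge> (\<Sum>c\<in>UNIV. \<mu> c)"
    proof (rule sum_mono)
      fix c show "\<mu> c \<le> G \<phi> k a c * \<mu> c"
        using mult_right_mono[of 1 "G \<phi> k a c" "\<mu> c"] P1 mu(1) by simp
    qed
    then have "r ^ k * \<mu> a \<ge> 1" using G_eig[OF mu(3), of k a] mu(2) by simp
    then have "\<mu> a \<noteq> 0" by auto
    then show "\<mu> a > 0" using mu(1) by (simp add: order_less_le)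
  qed
  have isPF: "is_PF_freq \<phi> \<mu>" unfolding is_PF_freq_def using mupos mu by blast
  have uniq: "\<mu>' = \<mu>" if pf: "is_PF_freq \<phi> \<mu>'" for \<mu>'
  proof -
    obtain r' where m': "\<forall>a. \<mu>' a > 0" "sum \<mu>' UNIV = 1"
        "\<forall>a. (\<Sum>b\<in>UNIV. real (incidence \<phi> a b) * \<mu>' b) = r' * \<mu>' a"
      using pf unfolding is_PF_freq_def by blast
    have e1: "\<forall>a. (\<Sum>c\<in>UNIV. G \<phi> k a c * \<mu> c) = r ^ k * \<mu> a" using G_eig[OF mu(3)] by blast
    have e2: "\<forall>a. (\<Sum>c\<in>UNIV. G \<phi> k a c * \<mu>' c) = r' ^ k * \<mu>' a" using G_eig[OF m'(3)] by blast
    have A: "r' ^ k \<le> r ^ k \<and> (r' ^ k = r ^ k \<longrightarrow> \<mu>' = \<mu>)"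
      by (rule PF_unique[OF P1 mupos mu(2) e1 m'(1) m'(2) e2])
    have B: "r ^ k \<le> r' ^ k \<and> (r ^ k = r' ^ k \<longrightarrow> \<mu> = \<mu>')"
      by (rule PF_unique[OF P1 m'(1) m'(2) e2 mupos mu(2) e1])
    from A B show ?thesis by auto
  qed
  have "freq \<phi> = \<mu>" unfolding freq_def using isPF uniq by (rule the_equality)
  then show ?thesis using isPF by simp
qed


lemma eventually_nonneg:
  fixes \<phi> :: "'a::finite \<Rightarrow> 'a list" and \<beta> :: "'a \<Rightarrow> real"
  assumes prim: "primitive \<phi>" and bm: "(\<Sum>a\<in>UNIV. \<beta> a * freq \<phi> a) > 0"
  shows "\<exists>J. \<forall>j\<ge>J. 0 \<le> Bw \<beta> (morph_pow \<phi> j [b])"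
proof -
  define \<mu> where "\<mu> = freq \<phi>"
  have pf: "is_PF_freq \<phi> \<mu>" using PF_freq[OF prim] by (simp add: \<mu>_def)
  obtain r where mu: "\<forall>a. \<mu> a > 0" "sum \<mu> UNIV = 1"
      "\<forall>a. (\<Sum>b\<in>UNIV. real (incidence \<phi> a b) * \<mu> b) = r * \<mu> a"
    using pf unfolding is_PF_freq_def by blast
  obtain k where k: "k \<ge> 1" "\<forall>a b. b \<in> set (morph_pow \<phi> k [a])" using prim_k[OF prim] by blast
  have P1: "\<forall>a c. G \<phi> k a c \<ge> 1" using G_pos[OF k(2)] by blast
  define \<rho> where "\<rho> = r ^ k"
  have eig: "\<forall>a. (\<Sum>c\<in>UNIV. G \<phi> k a c * \<mu> c) = \<rho> * \<mu> a" using G_eig[OF mu(3)] by (simp add: \<rho>_def)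
  have rho: "\<rho> \<ge> 1" by (rule rho_ge1[OF P1 mu(1) mu(2) eig])
  have bm': "(\<Sum>a\<in>UNIV. \<beta> a * \<mu> a) > 0" using bm by (simp add: \<mu>_def)
  have each: "\<exists>N. \<forall>n\<ge>N. 0 \<le> Bw \<beta> (morph_pow \<phi> (k * n + i) [b])" for i
  proof -
    define u where "u n a = G \<phi> (k * n + i) a b / \<rho> ^ n" for n a
    have Gs: "G \<phi> (k * Suc n + i) a b = (\<Sum>c\<in>UNIV. G \<phi> k a c * G \<phi> (k * n + i) c b)" for n a
    proof -
      have "k * Suc n + i = k + (k * n + i)" by simp
      then have "morph_pow \<phi> (k * Suc n + i) [b] = morph_pow \<phi> k (morph_pow \<phi> (k * n + i) [b])"
        by (simp only: mp_add)
      then show ?thesis unfolding G_def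
        using count_mp[of \<phi> k "morph_pow \<phi> (k * n + i) [b]" a] by (simp add: mult.commute)
    qed
    have rec: "\<forall>n a. u (Suc n) a = (\<Sum>c\<in>UNIV. G \<phi> k a c * u n c) / \<rho>"
    proof (intro allI)
      fix n a
      have "(\<Sum>c\<in>UNIV. G \<phi> k a c * u n c) / \<rho> = (\<Sum>c\<in>UNIV. G \<phi> k a c * G \<phi> (k * n + i) c b) / \<rho> ^ n / \<rho>"
        unfolding u_def by (simp add: sum_divide_distrib)
      then show "u (Suc n) a = (\<Sum>c\<in>UNIV. G \<phi> k a c * u n c) / \<rho>"
        unfolding u_def Gs by (simp add: field_simps)
    qed
    have u0: "\<forall>a. u 0 a \<ge> 0" by (simp add: u_def G_def)
    have s0: "sum (u 0) UNIV > 0"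
    proof -
      have "sum (u 0) UNIV = real (length (morph_pow \<phi> i [b]))"
        unfolding u_def G_def using sum_count_len by simp
      moreover have "morph_pow \<phi> i [b] \<noteq> []"
        using mp_nonempty[of \<phi> "[b]" i] phi_nonempty[OF prim] by auto
      ultimately show ?thesis by simp
    qed
    obtain N where N: "\<forall>n\<ge>N. (\<Sum>a\<in>UNIV. \<beta> a * u n a) \<ge> 0"
      using sign_lemma[OF P1 mu(1) mu(2) eig rec u0 s0 bm'] by blast
    show ?thesis
    proof (intro exI[of _ N] allI impI)
      fix n assume "N \<le> n"
      then have A: "(\<Sum>a\<in>UNIV. \<beta> a * u n a) \<ge> 0" using N by blast
      have "Bw \<beta> (morph_pow \<phi> (k * n + i) [b]) = \<rho> ^ n * (\<Sum>a\<in>UNIV. \<beta> a * u n a)"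
        unfolding Bw_count u_def G_def using rho
        by (simp add: sum_distrib_left field_simps)
      then show "0 \<le> Bw \<beta> (morph_pow \<phi> (k * n + i) [b])" using A rho by simp
    qed
  qed
  then obtain Nf where Nf: "\<forall>i n. n \<ge> Nf i \<longrightarrow> 0 \<le> Bw \<beta> (morph_pow \<phi> (k * n + i) [b])"
    by metis
  define X where "X = (\<Sum>i<k. Nf i)"
  show ?thesis
  proof (intro exI[of _ "k * X"] allI impI)
    fix j assume j: "k * X \<le> j"
    have kp: "k > 0" using k(1) by simp
    have "X \<le> j div k" using j kp by (simp add: less_eq_div_iff_mult_less_eq mult.commute)
    moreover have "Nf (j mod k) \<le> X" unfolding X_def
      by (rule member_le_sum) (use kp in auto)
    ultimately have "Nf (j mod k) \<le> j div k" by simp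
    then have "0 \<le> Bw \<beta> (morph_pow \<phi> (k * (j div k) + j mod k) [b])" using Nf by blast
    then show "0 \<le> Bw \<beta> (morph_pow \<phi> j [b])" by simp
  qed
qed


lemma Bw_hom:
  "Bw (\<lambda>a. d1 * real_of_int (fst (S a)) + d2 * real_of_int (snd (S a))) w =
     d1 * real_of_int (fst (hom_word S w)) + d2 * real_of_int (snd (hom_word S w))"
  by (induction w) (auto simp: Bw_def hom_word_def algebra_simps)

theorem proposition10:
  fixes \<phi> :: "'a::finite \<Rightarrow> 'a list" and S :: "'a \<Rightarrow> int \<times> int"
  assumes "primitive \<phi>"
    and "drift \<phi> S \<noteq> (0, 0)"
  shows "infinite (UNIV - hom_word S ` lang \<phi>)"
proof -
  note prim = assms(1)
  define d1 where "d1 = (\<Sum>a\<in>UNIV. freq \<phi> a * real_of_int (fst (S a)))"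
  define d2 where "d2 = (\<Sum>a\<in>UNIV. freq \<phi> a * real_of_int (snd (S a)))"
  have "drift \<phi> S = (d1, d2)" by (simp add: drift_def d1_def d2_def)
  then have dne: "d1 \<noteq> 0 \<or> d2 \<noteq> 0" using assms(2) by auto
  define \<beta> where "\<beta> a = d1 * real_of_int (fst (S a)) + d2 * real_of_int (snd (S a))" for a
  have "(\<Sum>a\<in>UNIV. \<beta> a * freq \<phi> a) = d1 * d1 + d2 * d2"
    unfolding \<beta>_def d1_def d2_def
    by (simp add: algebra_simps sum.distrib sum_distrib_left)
  moreover have "d1 * d1 + d2 * d2 > 0" using dne
    by (metis add_pos_nonneg add_nonneg_pos not_real_square_gt_zero zero_le_square)
  ultimately have bm: "(\<Sum>a\<in>UNIV. \<beta> a * freq \<phi> a) > 0" by simp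
  have "\<forall>b. \<exists>J. \<forall>j\<ge>J. 0 \<le> Bw \<beta> (morph_pow \<phi> j [b])"
    using eventually_nonneg[OF prim bm] by blast
  then obtain Jf where Jf: "\<forall>b j. j \<ge> Jf b \<longrightarrow> 0 \<le> Bw \<beta> (morph_pow \<phi> j [b])" by metis
  define J where "J = (\<Sum>b\<in>UNIV. Jf b)"
  define K where "K i = (\<Sum>b\<in>UNIV. max 0 (- Bw \<beta> (morph_pow \<phi> i [b])))" for i
  have K0: "\<forall>i. K i \<ge> 0" unfolding K_def by (auto intro: sum_nonneg)
  have KJ: "\<forall>i\<ge>J. K i = 0"
  proof (intro allI impI)
    fix i assume i: "J \<le> i"
    have "max 0 (- Bw \<beta> (morph_pow \<phi> i [b])) = 0" for b
    proof -
      have "Jf b \<le> J" unfolding J_def by (rule member_le_sum) auto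
      then show ?thesis using Jf i by auto
    qed
    then show "K i = 0" unfolding K_def by simp
  qed
  have Kb: "\<forall>i x. Bw \<beta> (morph_pow \<phi> i [x]) \<ge> - K i"
  proof (intro allI)
    fix i x
    have "max 0 (- Bw \<beta> (morph_pow \<phi> i [x])) \<le> K i"
      unfolding K_def by (rule member_le_sum) auto
    then show "Bw \<beta> (morph_pow \<phi> i [x]) \<ge> - K i" by linarith
  qed
  define C where "C = (2 * real (Lmax \<phi>) + 1) * (\<Sum>i\<in>{0..<J}. K i)"
  have low: "Bw \<beta> w \<ge> - C" if wl: "w \<in> lang \<phi>" for w
  proof -
    obtain n a where "sublist w (morph_pow \<phi> n [a])" using wl unfolding lang_def by blast
    from main_bound[OF K0 KJ Kb this, of 0] show ?thesis by (simp add: C_def)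
  qed
  define s1 :: int where "s1 = (if d1 > 0 then 1 else if d1 < 0 then -1 else 0)"
  define s2 :: int where "s2 = (if d2 > 0 then 1 else if d2 < 0 then -1 else 0)"
  have s1: "d1 * real_of_int s1 = \<bar>d1\<bar>" by (simp add: s1_def)
  have s2: "d2 * real_of_int s2 = \<bar>d2\<bar>" by (simp add: s2_def)
  define D where "D = \<bar>d1\<bar> + \<bar>d2\<bar>"
  have Dp: "D > 0" using dne by (auto simp: D_def)
  have sne: "s1 \<noteq> 0 \<or> s2 \<noteq> 0" using dne by (auto simp: s1_def s2_def)
  define g where "g n = (- int n * s1, - int n * s2)" for n :: nat
  define N0 where "N0 = nat \<lceil>C / D\<rceil> + 1"
  have notin: "g n \<notin> hom_word S ` lang \<phi>" if n: "n \<ge> N0" for n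
  proof
    assume "g n \<in> hom_word S ` lang \<phi>"
    then obtain w where w0: "g n = hom_word S w" "w \<in> lang \<phi>" by (rule imageE)
    then have w: "w \<in> lang \<phi>" "hom_word S w = g n" by auto
    have "Bw \<beta> w = d1 * real_of_int (- int n * s1) + d2 * real_of_int (- int n * s2)"
      unfolding \<beta>_def Bw_hom w(2) by (simp add: g_def)
    also have "\<dots> = - real n * (d1 * real_of_int s1 + d2 * real_of_int s2)" by (simp add: algebra_simps)
    also have "\<dots> = - real n * D" unfolding s1 s2 D_def by simp
    finally have B: "Bw \<beta> w = - real n * D" .
    have "real n > C / D" using n unfolding N0_def by linarith
    then have "real n * D > C" using Dp by (simp add: pos_divide_less_eq)
    then show False using low[OF w(1)] B by simp
  qed
  have inj: "inj g"
  proof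
    fix m n assume "g m = g n"
    then have "int m * s1 = int n * s1" "int m * s2 = int n * s2" by (auto simp: g_def)
    then show "m = n" using sne by auto
  qed
  have "infinite (g ` {N0..})"
    using inj by (simp add: finite_image_iff inj_on_subset[OF inj] infinite_Ici)
  moreover have "g ` {N0..} \<subseteq> UNIV - hom_word S ` lang \<phi>"
  proof
    fix y assume "y \<in> g ` {N0..}"
    then obtain n where "n \<ge> N0" "y = g n" by auto
    then show "y \<in> UNIV - hom_word S ` lang \<phi>" using notin[of n] by simp
  qed
  ultimately show ?thesis using infinite_super by blast
qed

end
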